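(* Let $D = (D_{ij})$ be an $m \times m$ matrix of differences and let $G_n$ be the $m$-block circulant graph on $nm$ vertices with matrix of differences $D$. Setting $\alpha_n = \alpha(G_n)/(nm)$, we have $\lim_{n\to\infty} \alpha_n = \sup_n \alpha_n$.
   Context: An $m\times m$ matrix of differences is a matrix $D=(D_{ij})$ of finite subsets of $\mathbb{Z}$ with $D_{ji} = -D_{ij}$. $G_n$ has vertex set $\{(i,u) : 0 \leq i \leq m-1,\ 0\leq u \leq n-1\}$, and $(i,u)$, $(j,v)$ (possibly equal) are adjacent iff $v-u$ is congruent modulo $n$ to some element of $D_{ij}$. $\alpha(G)$ is the maximum size of an independent set (no two adjacent vertices, no vertex with a loop). *)

theory Defs
  imports Complex_Main "HOL-Number_Theory.Cong"
begin

definition matrix_of_differences :: "nat \<Rightarrow> (nat \<Rightarrow> nat \<Rightarrow> int set) \<Rightarrow> bool" where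
  "matrix_of_differences m D \<longleftrightarrow>
     (\<forall>i<m. \<forall>j<m. finite (D i j) \<and> D j i = uminus ` D i j)"

definition bc_vertices :: "nat \<Rightarrow> nat \<Rightarrow> (nat \<times> nat) set" where
  "bc_vertices m n = {0..<m} \<times> {0..<n}"

definition bc_adj :: "(nat \<Rightarrow> nat \<Rightarrow> int set) \<Rightarrow> nat \<Rightarrow> nat \<times> nat \<Rightarrow> nat \<times> nat \<Rightarrow> bool" where
  "bc_adj D n x y \<longleftrightarrow>
     (\<exists>d\<in>D (fst x) (fst y). [int (snd y) - int (snd x) = d] (mod int n))"

text \<open>Independent set: no two (possibly equal) members are adjacent; in particular no loops.\<close>
definition bc_independent :: "(nat \<Rightarrow> nat \<Rightarrow> int set) \<Rightarrow> nat \<Rightarrow> (nat \<times> nat) set \<Rightarrow> bool" where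
  "bc_independent D n S \<longleftrightarrow> (\<forall>x\<in>S. \<forall>y\<in>S. \<not> bc_adj D n x y)"

definition bc_alpha :: "nat \<Rightarrow> (nat \<Rightarrow> nat \<Rightarrow> int set) \<Rightarrow> nat \<Rightarrow> nat" where
  "bc_alpha m D n = Max (card ` {S. S \<subseteq> bc_vertices m n \<and> bc_independent D n S})"

end

theory Submission
  imports Defs
begin

lemma bc_fin: "finite (bc_vertices m n)"
  unfolding bc_vertices_def by simp

lemma bc_card: "card (bc_vertices m n) = m * n"
  unfolding bc_vertices_def by (simp add: card_cartesian_product)

lemma bc_setfin: "finite {S. S \<subseteq> bc_vertices m n \<and> bc_independent D n S}"
  using bc_fin by (rule rev_finite_subset[OF finite_Collect_subsets]) auto

lemma alpha_ge:
  assumes "S \<subseteq> bc_vertices m n" "bc_independent D n S"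
  shows "card S \<le> bc_alpha m D n"
  unfolding bc_alpha_def
  by (rule Max_ge) (use bc_setfin assms in auto)

lemma alpha_ex:
  "\<exists>S. S \<subseteq> bc_vertices m n \<and> bc_independent D n S \<and> card S = bc_alpha m D n"
proof -
  have "{} \<in> {S. S \<subseteq> bc_vertices m n \<and> bc_independent D n S}"
    by (simp add: bc_independent_def)
  then have "bc_alpha m D n \<in> card ` {S. S \<subseteq> bc_vertices m n \<and> bc_independent D n S}"
    unfolding bc_alpha_def by (intro Max_in) (use bc_setfin in auto)
  then show ?thesis by auto
qed

lemma alpha_le: "bc_alpha m D n \<le> m * n"
proof -
  obtain S where "S \<subseteq> bc_vertices m n" "card S = bc_alpha m D n"
    using alpha_ex by blast
  moreover have "card S \<le> card (bc_vertices m n)" using card_mono[OF bc_fin] \<open>S \<subseteq> bc_vertices m n\<close> by blast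
  ultimately show ?thesis using bc_card[of m n] by simp
qed

lemma finite_bound: "finite (A::int set) \<Longrightarrow> \<exists>M::nat. \<forall>d\<in>A. \<bar>d\<bar> \<le> int M"
proof (induction A rule: finite_induct)
  case empty then show ?case by auto
next
  case (insert x F)
  then obtain M where M: "\<forall>d\<in>F. \<bar>d\<bar> \<le> int M" by blast
  show ?case
    by (rule exI[of _ "M + nat \<bar>x\<bar>"]) (use M in auto)
qed

lemma key:
  assumes bound: "\<forall>i<m. \<forall>j<m. \<forall>d\<in>D i j. \<bar>d\<bar> \<le> int M"
    and n: "n \<ge> 1"
  shows "bc_alpha m D n * ((N - M) div n) \<le> bc_alpha m D N"
proof -
  define q where "q = (N - M) div n"
  obtain S where S: "S \<subseteq> bc_vertices m n" "bc_independent D n S" "card S = bc_alpha m D n"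
    using alpha_ex by blast
  have qn: "q * n + M \<le> N" if "q \<ge> 1"
  proof -
    have "q * n \<le> N - M" unfolding q_def by (simp add: div_times_less_eq_dividend)
    moreover have "N \<ge> M" using that unfolding q_def by (cases "N \<ge> M") auto
    ultimately show ?thesis by linarith
  qed
  define f where "f = (\<lambda>((i::nat,u::nat),k::nat). (i, u + k * n))"
  define T where "T = f ` (S \<times> {..<q})"
  have inj: "inj_on f (S \<times> {..<q})"
  proof (rule inj_onI)
    fix a b assume a: "a \<in> S \<times> {..<q}" and b: "b \<in> S \<times> {..<q}" and e: "f a = f b"
    obtain i u k where a': "a = ((i,u),k)" by (metis prod.collapse)
    obtain j v l where b': "b = ((j,v),l)" by (metis prod.collapse)
    have "u < n" "v < n" using a b S(1) a' b' unfolding bc_vertices_def by auto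
    moreover have "u + k * n = v + l * n" "i = j" using e a' b' unfolding f_def by auto
    ultimately have "u = v" "k = l"
    proof -
      have "(u + k * n) mod n = (v + l * n) mod n" using \<open>u + k * n = v + l * n\<close> by simp
      then show "u = v" using \<open>u < n\<close> \<open>v < n\<close> by simp
      have "(u + k * n) div n = (v + l * n) div n" using \<open>u + k * n = v + l * n\<close> by simp
      then show "k = l" using \<open>u < n\<close> \<open>v < n\<close> n by simp
    qed
    then show "a = b" using a' b' \<open>i = j\<close> by simp
  qed
  have cardT: "card T = bc_alpha m D n * q"
    unfolding T_def using card_image[OF inj] S(3) by (simp add: card_cartesian_product)
  show ?thesis
  proof (cases "q = 0")
    case True then show ?thesis by (simp add: q_def)
  next
    case False
    then have qN: "q * n + M \<le> N" using qn by simp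
    have sub: "T \<subseteq> bc_vertices m N"
    proof
      fix x assume "x \<in> T"
      then obtain i u k where x: "x = (i, u + k * n)" "(i,u) \<in> S" "k < q"
        unfolding T_def f_def by auto
      have "i < m" "u < n" using x S(1) unfolding bc_vertices_def by auto
      moreover have "u + k * n < q * n"
      proof -
        have "Suc k \<le> q" using x by simp
        then have "Suc k * n \<le> q * n" by (rule mult_right_mono) simp
        then show ?thesis using \<open>u < n\<close> by simp
      qed
      ultimately show "x \<in> bc_vertices m N" using x qN unfolding bc_vertices_def by auto
    qed
    have ind: "bc_independent D N T"
      unfolding bc_independent_def
    proof (intro ballI notI)
      fix x y assume "x \<in> T" "y \<in> T" and adj: "bc_adj D N x y"
      then obtain i u k where x: "x = (i, u + k * n)" "(i,u) \<in> S" "k < q"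
        unfolding T_def f_def by auto
      obtain j v l where y: "y = (j, v + l * n)" "(j,v) \<in> S" "l < q"
        using \<open>y \<in> T\<close> unfolding T_def f_def by auto
      have im: "i < m" "j < m" "u < n" "v < n" using x y S(1) unfolding bc_vertices_def by auto
      obtain d where d: "d \<in> D i j" and c: "[int (v + l * n) - int (u + k * n) = d] (mod int N)"
        using adj x y unfolding bc_adj_def by auto
      have dM: "\<bar>d\<bar> \<le> int M" using bound im d by blast
      have lt1: "u + k * n < q * n"
      proof -
        have "Suc k \<le> q" using x by simp
        then have "Suc k * n \<le> q * n" by (rule mult_right_mono) simp
        then show ?thesis using im by simp
      qed
      have lt2: "v + l * n < q * n"
      proof -
        have "Suc l \<le> q" using y by simp
        then have "Suc l * n \<le> q * n" by (rule mult_right_mono) simp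
        then show ?thesis using im by simp
      qed
      define a where "a = int (v + l * n) - int (u + k * n) - d"
      have "int N dvd a" using c unfolding a_def cong_iff_dvd_diff by assumption
      moreover have "\<bar>a\<bar> < int N"
      proof -
        have i1: "int (u + k * n) < int (q * n)" "int (v + l * n) < int (q * n)" using lt1 lt2 by (simp_all only: of_nat_less_iff)
        have i2: "int (q * n) + int M \<le> int N" using qN by linarith
        have i3: "- int M \<le> d" "d \<le> int M" using dM by (simp_all add: abs_le_iff)
        have i4: "0 \<le> int (u + k * n)" "0 \<le> int (v + l * n)" by simp_all
        show ?thesis unfolding a_def abs_less_iff using i1 i2 i3 i4 by linarith
      qed
      ultimately have "a = 0"
      proof (rule_tac ccontr)
        assume "int N dvd a" "\<bar>a\<bar> < int N" "a \<noteq> 0"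
        then have "\<bar>int N\<bar> \<le> \<bar>a\<bar>" using dvd_imp_le_int by blast
        then show False using \<open>\<bar>a\<bar> < int N\<close> by simp
      qed
      then have "int v - int u = d + int k * int n - int l * int n" unfolding a_def by simp
      then have "int v - int u - d = int n * (int k - int l)" by (simp add: algebra_simps)
      then have "int n dvd (int v - int u - d)" by simp
      then have "[int v - int u = d] (mod int n)"
        unfolding cong_iff_dvd_diff by assumption
      then have "bc_adj D n (i,u) (j,v)" unfolding bc_adj_def using d by auto
      then show False using S(2) x y unfolding bc_independent_def by blast
    qed
    show ?thesis using alpha_ge[OF sub ind] cardT q_def by simp
  qed
qed

lemma lower:
  assumes bound: "\<forall>i<m. \<forall>j<m. \<forall>d\<in>D i j. \<bar>d\<bar> \<le> int M"
    and n: "n \<ge> 1" and N: "N \<ge> M + n" and m: "m \<ge> 1"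
  shows "real (bc_alpha m D N) / (real N * real m) \<ge>
         real (bc_alpha m D n) / (real n * real m) - real (M + n) / real N"
proof -
  define q where "q = (N - M) div n"
  define A where "A = bc_alpha m D n"
  define B where "B = bc_alpha m D N"
  define x where "x = real A / (real n * real m)"
  have AB: "real A * real q \<le> real B" using key[OF bound n, of N] unfolding q_def A_def B_def
    by (metis of_nat_le_iff of_nat_mult)
  have dm: "q * n + (N - M) mod n = N - M" unfolding q_def by (rule div_mult_mod_eq)
  have lt: "(N - M) mod n < n" using n by simp
  have "real (q * n) + real ((N - M) mod n) = real N - real M" using dm N
    by (metis of_nat_add of_nat_diff le_add1 le_trans)
  then have qn: "real q * real n \<ge> real N - real (M + n)" using lt
    by (simp add: of_nat_less_iff[symmetric] del: of_nat_less_iff)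
  have Npos: "real N > 0" using N n by simp
  have npos: "real n > 0" using n by simp
  have mpos: "real m > 0" using m by simp
  have x0: "x \<ge> 0" unfolding x_def by simp
  have x1: "x \<le> 1"
  proof -
    have "real A \<le> real n * real m" using alpha_le[of m D n] unfolding A_def
      by (metis mult.commute of_nat_le_iff of_nat_mult)
    then show ?thesis unfolding x_def using npos mpos by simp
  qed
  have eq: "real A * real q / (real N * real m) = x * (real q * real n) / real N"
    unfolding x_def using npos mpos Npos by (simp add: field_simps)
  have "x * (real q * real n) / real N \<ge> x * (real N - real (M + n)) / real N"
    using qn x0 Npos by (intro divide_right_mono mult_left_mono) auto
  moreover have "x * (real N - real (M + n)) / real N = x - x * real (M + n) / real N"
    using Npos by (simp add: field_simps)
  moreover have "x * real (M + n) / real N \<le> real (M + n) / real N"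
  proof -
    have "x * real (M + n) \<le> real (M + n)" using mult_left_le_one_le[of "real (M+n)" x] x0 x1 by simp
    then show ?thesis using Npos by (intro divide_right_mono) auto
  qed
  moreover have "real B / (real N * real m) \<ge> real A * real q / (real N * real m)"
    using AB Npos mpos by (intro divide_right_mono) auto
  ultimately show ?thesis unfolding x_def[symmetric] A_def[symmetric] B_def[symmetric] using eq by linarith
qed

theorem theorem8:
  fixes m :: nat and D :: "nat \<Rightarrow> nat \<Rightarrow> int set"
  assumes "m \<ge> 1" and "matrix_of_differences m D"
  shows "(\<lambda>n. real (bc_alpha m D n) / (real n * real m)) \<longlonglongrightarrow>
           (SUP n\<in>{1..}. real (bc_alpha m D n) / (real n * real m))"
proof -
  define a where "a = (\<lambda>n. real (bc_alpha m D n) / (real n * real m))"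
  have a0: "a n \<ge> 0" for n unfolding a_def by simp
  have a1: "a n \<le> 1" for n
  proof (cases "n = 0")
    case True then show ?thesis unfolding a_def by simp
  next
    case False
    have "real (bc_alpha m D n) \<le> real n * real m" using alpha_le[of m D n]
      by (metis mult.commute of_nat_le_iff of_nat_mult)
    then show ?thesis unfolding a_def using False assms(1) by simp
  qed
  have bdd: "bdd_above (a ` {1..})" using a1 by (intro bdd_aboveI[of _ 1]) auto
  define s where "s = (SUP n\<in>{1..}. a n)"
  have up: "a n \<le> s" if "n \<ge> 1" for n unfolding s_def using bdd that by (intro cSUP_upper) auto
  have "\<exists>M::nat. \<forall>d\<in>(\<Union>i\<in>{..<m}. \<Union>j\<in>{..<m}. D i j). \<bar>d\<bar> \<le> int M"
  proof (rule finite_bound)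
    have "\<forall>i<m. \<forall>j<m. finite (D i j)" using assms(2) unfolding matrix_of_differences_def by blast
    then show "finite (\<Union>i\<in>{..<m}. \<Union>j\<in>{..<m}. D i j)" by simp
  qed
  then obtain M where bound: "\<forall>i<m. \<forall>j<m. \<forall>d\<in>D i j. \<bar>d\<bar> \<le> int M"
    by (metis UN_I lessThan_iff)
  have "a \<longlonglongrightarrow> s"
  proof (rule LIMSEQ_I)
    fix e :: real assume e: "e > 0"
    have "s - e/2 < (SUP n\<in>{1..}. a n)" using e unfolding s_def by simp
    then have "\<exists>x\<in>{1..}. s - e/2 < a x"
      using less_cSUP_iff[OF _ bdd, of "s - e/2"] by auto
    then obtain n0 where n0: "n0 \<ge> 1" "s - e/2 < a n0" by auto
    define K where "K = M + n0"
    define no where "no = max (K + 1) (nat \<lceil>2 * real K / e\<rceil> + 1)"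
    have "\<forall>N\<ge>no. norm (a N - s) < e"
    proof (intro allI impI)
      fix N assume N: "N \<ge> no"
      then have N1: "N \<ge> K" "N \<ge> 1" unfolding no_def by auto
      have lo: "a N \<ge> a n0 - real K / real N"
        using lower[OF bound n0(1) _ assms(1), of N] N1 unfolding a_def K_def by simp
      have "real N > 2 * real K / e"
      proof -
        have "real N \<ge> real (nat \<lceil>2 * real K / e\<rceil> + 1)" using N unfolding no_def by simp
        moreover have "real (nat \<lceil>2 * real K / e\<rceil>) \<ge> 2 * real K / e" by linarith
        ultimately show ?thesis by simp
      qed
      then have "2 * real K < e * real N" using e by (simp add: field_simps)
      then have "real K / real N < e / 2" using N1 by (simp add: field_simps)
      then show "norm (a N - s) < e" using lo n0 up[OF N1(2)] by simp
    qed
    then show "\<exists>no. \<forall>N\<ge>no. norm (a N - s) < e" by blast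
  qed
  then show ?thesis unfolding a_def s_def .
qed

end
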